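(* Let $F:[0,1]\to\mathbb R$ be measurable. Assume that for each $\varepsilon>0$ there is a countable collection $(S_j)_j$ of pairwise disjoint measurable subsets of $[0,1]$ such that $\sum_j\mathrm{meas}(S_j)\geq1-\varepsilon$ and, for each $j$ and each $y\in S_j$, $$\mathrm{meas}(\{x\in S_j\colon F(x)=F(y)\})\leq\varepsilon\,\mathrm{meas}(S_j).$$ Then the cumulative distribution function of $F_\ast(\nu)$ is continuous, where $\nu$ is Lebesgue measure on $[0,1]$.
   Context: $\mathrm{meas}$ denotes Lebesgue measure. *)

theory Defs
  imports "HOL-Probability.Probability"
begin

end

theory Submission
  imports Defs
begin

lemma fm01: "X \<in> sets lebesgue \<Longrightarrow> X \<subseteq> {0..1::real} \<Longrightarrow> X \<in> lmeasurable"
  by (rule fmeasurableI2[OF lmeasurable_interval(1)])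

lemma core:
  fixes F :: "real \<Rightarrow> real" and a :: real and \<epsilon> :: real
  assumes Ameas: "{x\<in>{0..1}. F x = a} \<in> sets lebesgue"
    and eps: "\<epsilon> > 0"
    and Smeas: "\<forall>j. S j \<in> sets lebesgue \<and> S j \<subseteq> {0..1}"
    and disj: "disjoint_family S"
    and sum: "(\<Sum>j. measure lebesgue (S j)) \<ge> 1 - \<epsilon>"
    and small: "\<forall>j. \<forall>y\<in>S j. measure lebesgue {x \<in> S j. F x = F y} \<le> \<epsilon> * measure lebesgue (S j)"
  shows "measure lebesgue {x\<in>{0..1}. F x = a} \<le> 2 * \<epsilon>"
proof -
  define A where "A = {x\<in>{0..1}. F x = a}"
  define U where "U = (\<Union>j. S j)"
  have AL: "A \<in> lmeasurable" unfolding A_def by (rule fm01[OF Ameas]) auto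
  have US: "U \<in> sets lebesgue" using Smeas unfolding U_def by (intro sets.countable_UN') auto
  have Usub: "U \<subseteq> {0..1}" using Smeas unfolding U_def by auto
  have UL: "U \<in> lmeasurable" by (rule fm01[OF US Usub])
  have SL: "S j \<in> lmeasurable" for j using Smeas by (intro fm01) auto
  have s1: "(\<lambda>j. measure lebesgue (S j)) sums measure lebesgue U"
    unfolding U_def
    apply (rule measure_UNION)
    using Smeas disj UL unfolding U_def by (auto simp: fmeasurable_def)
  have AS: "A \<in> sets lebesgue" using Ameas unfolding A_def .
  have AUL: "A \<inter> U \<in> lmeasurable" using AS US Usub by (intro fm01) auto
  have ADL: "A - U \<in> lmeasurable" using AS US AL by (intro fm01) (auto simp: A_def)
  have AUeq: "(\<Union>j. A \<inter> S j) = A \<inter> U" unfolding U_def by auto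
  have s2: "(\<lambda>j. measure lebesgue (A \<inter> S j)) sums measure lebesgue (A \<inter> U)"
  proof -
    have r: "range (\<lambda>j. A \<inter> S j) \<subseteq> sets lebesgue" using Smeas AS by auto
    have d: "disjoint_family (\<lambda>j. A \<inter> S j)" using disj by (auto simp: disjoint_family_on_def)
    have f: "emeasure lebesgue (\<Union>j. A \<inter> S j) \<noteq> \<infinity>"
      unfolding AUeq using fmeasurableD2[OF AUL] by simp
    show ?thesis using measure_UNION[OF r d f] unfolding AUeq .
  qed
  have le: "measure lebesgue (A \<inter> S j) \<le> \<epsilon> * measure lebesgue (S j)" for j
  proof (cases "A \<inter> S j = {}")
    case True then show ?thesis using eps by simp
  next
    case False
    then obtain y where y: "y \<in> A" "y \<in> S j" by auto
    have "S j \<inter> {x\<in>{0..1}. F x = a} \<in> sets lebesgue" using Smeas Ameas by auto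
    moreover have "S j \<inter> {x\<in>{0..1}. F x = a} = {x \<in> S j. F x = F y}"
      using y Smeas unfolding A_def by fastforce
    ultimately have "{x \<in> S j. F x = F y} \<in> lmeasurable" using Smeas by (intro fm01) auto
    moreover have "A \<inter> S j \<subseteq> {x \<in> S j. F x = F y}" using y unfolding A_def by auto
    ultimately have "measure lebesgue (A \<inter> S j) \<le> measure lebesgue {x \<in> S j. F x = F y}"
      using AL SL by (intro measure_mono_fmeasurable) auto
    then show ?thesis using small y by fastforce
  qed
  have "measure lebesgue (A \<inter> U) \<le> \<epsilon> * measure lebesgue U"
    using sums_le[OF _ s2 sums_mult[OF s1, of \<epsilon>]] le by auto
  also have "measure lebesgue U \<le> 1"
  proof -
    have "measure lebesgue U \<le> measure lebesgue {0..1::real}"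
      using Usub US by (intro measure_mono_fmeasurable) auto
    then show ?thesis by simp
  qed
  then have "\<epsilon> * measure lebesgue U \<le> \<epsilon>" using eps by simp
  finally have AU: "measure lebesgue (A \<inter> U) \<le> \<epsilon>" .
  have "measure lebesgue (A - U) \<le> measure lebesgue ({0..1} - U)"
    using AL UL unfolding A_def
    by (intro measure_mono_fmeasurable) (auto intro: fmeasurable_Diff)
  also have "\<dots> = 1 - measure lebesgue U"
    using measure_Diff[where M=lebesgue and A="{0..1::real}" and B=U] Usub UL by auto
  also have "measure lebesgue U = (\<Sum>j. measure lebesgue (S j))" using s1 sums_unique by auto
  finally have AD: "measure lebesgue (A - U) \<le> \<epsilon>" using sum by linarith
  have "A = (A \<inter> U) \<union> (A - U)" by auto
  then have "measure lebesgue A = measure lebesgue (A \<inter> U) + measure lebesgue ((A - U) - (A \<inter> U))"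
    using measure_Un2[OF AUL ADL] by simp
  moreover have "(A - U) - (A \<inter> U) = A - U" by auto
  ultimately have "measure lebesgue A = measure lebesgue (A \<inter> U) + measure lebesgue (A - U)" by simp
  then show ?thesis using AU AD unfolding A_def by linarith
qed

theorem lemma3p6:
  fixes F :: "real \<Rightarrow> real"
  assumes F_meas: "F \<in> borel_measurable (lebesgue_on {0..1})"
    and cover: "\<And>\<epsilon>::real. \<epsilon> > 0 \<Longrightarrow>
      \<exists>S :: nat \<Rightarrow> real set.
        (\<forall>j. S j \<in> sets lebesgue \<and> S j \<subseteq> {0..1}) \<and>
        disjoint_family S \<and>
        (\<Sum>j. measure lebesgue (S j)) \<ge> 1 - \<epsilon> \<and>
        (\<forall>j. \<forall>y\<in>S j. measure lebesgue {x \<in> S j. F x = F y} \<le> \<epsilon> * measure lebesgue (S j))"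
  shows "continuous_on UNIV (cdf (distr (lebesgue_on {0..1}) borel F))"
proof -
  have P: "prob_space (lebesgue_on {0..1::real})"
    by (rule prob_spaceI) (auto simp: emeasure_restrict_space)
  then interpret P: prob_space "lebesgue_on {0..1::real}" .
  have RD: "real_distribution (distr (lebesgue_on {0..1}) borel F)"
    using F_meas by (intro P.real_distribution_distr) simp
  interpret R: real_distribution "distr (lebesgue_on {0..1}) borel F" by (rule RD)
  have "isCont (cdf (distr (lebesgue_on {0..1}) borel F)) a" for a
  proof -
    have pre: "F -` {a} \<inter> space (lebesgue_on {0..1}) = {x\<in>{0..1}. F x = a}" by auto
    have m1: "{x\<in>{0..1}. F x = a} \<in> sets (lebesgue_on {0..1})"
      using measurable_sets[OF F_meas, of "{a}"] pre by auto
    have Ameas: "{x\<in>{0..1}. F x = a} \<in> sets lebesgue"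
      using m1 by (simp add: sets_restrict_space_iff)
    have "measure (distr (lebesgue_on {0..1}) borel F) {a} = measure (lebesgue_on {0..1}) (F -` {a} \<inter> space (lebesgue_on {0..1}))"
      by (rule measure_distr) (use F_meas in auto)
    also have "\<dots> = measure (lebesgue_on {0..1}) {x\<in>{0..1}. F x = a}" using pre by simp
    also have "\<dots> = measure lebesgue {x\<in>{0..1::real}. F x = a}" by (rule measure_restrict_space) auto
    finally have meq: "measure (distr (lebesgue_on {0..1}) borel F) {a} = measure lebesgue {x\<in>{0..1}. F x = a}" .
    have "measure lebesgue {x\<in>{0..1::real}. F x = a} \<le> 2 * \<epsilon>" if eps: "\<epsilon> > 0" for \<epsilon>
    proof -
      obtain S where "(\<forall>j. S j \<in> sets lebesgue \<and> S j \<subseteq> {0..1}) \<and>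
        disjoint_family S \<and>
        (\<Sum>j. measure lebesgue (S j)) \<ge> 1 - \<epsilon> \<and>
        (\<forall>j. \<forall>y\<in>S j. measure lebesgue {x \<in> S j. F x = F y} \<le> \<epsilon> * measure lebesgue (S j))"
        using cover[OF eps] by blast
      then show ?thesis using core[OF Ameas eps] by blast
    qed
    then have h0: "measure lebesgue {x\<in>{0..1::real}. F x = a} \<le> 0"
    proof -
      assume h: "\<And>\<epsilon>. \<epsilon> > 0 \<Longrightarrow> measure lebesgue {x\<in>{0..1::real}. F x = a} \<le> 2 * \<epsilon>"
      show ?thesis
      proof (rule ccontr)
        assume n: "\<not> measure lebesgue {x\<in>{0..1::real}. F x = a} \<le> 0"
        then have "measure lebesgue {x\<in>{0..1::real}. F x = a} \<le> 2 * (measure lebesgue {x\<in>{0..1::real}. F x = a} / 4)"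
          by (intro h) simp
        then show False using n by simp
      qed
    qed
    have "measure (distr (lebesgue_on {0..1}) borel F) {a} = 0"
      using meq h0 measure_nonneg[of lebesgue "{x\<in>{0..1::real}. F x = a}"] by linarith
    then show ?thesis using R.isCont_cdf by blast
  qed
  then show ?thesis by (simp add: continuous_at_imp_continuous_on)
qed

end
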